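(* Let $d\ge1$ and $\lambda=(\lambda_1,\dots,\lambda_d)$ a vector of positive integers with $\sum_t\lambda_t=n\ge2$. For distinct $i,j\in\{0,\dots,n-2\}$, we have $i\preceq j$ in $P(\lambda)$ if and only if $i<j$ and for every $t\in\{1,\dots,d\}$, \[ \frac{s_{t,i}+s_{t,j-i}-s_{t,j}}{n-1}=\left\lceil \frac{s_{t,i}}{n-1}\right\rceil + \left\lceil \frac{s_{t,j-i}}{n-1}\right\rceil - \left\lceil \frac{s_{t,j}}{n-1}\right\rceil . \]
   Context: $\Delta_\lambda=\mathrm{conv}(e_1,\dots,e_d,\lambda)\subset\mathbb{R}^d$, with fundamental parallelepiped $\Pi_\lambda=\{\sum_{i=1}^d\gamma_i(1,e_i)+\gamma_{d+1}(1,\lambda):0\le\gamma_i<1\}\subset\mathbb{R}^{d+1}$. $P(\lambda)$ is $\Pi_\lambda\cap\mathbb{Z}^{d+1}$ ordered by $\sigma\preceq\mu$ iff $\mu-\sigma\in\Pi_\lambda\cap\mathbb{Z}^{d+1}$. For $0\le b<n-1$ set $p(b)=\left(\sum_{t}\lceil b\lambda_t/(n-1)\rceil-b,\ \lceil b\lambda_1/(n-1)\rceil,\dots,\lceil b\lambda_d/(n-1)\rceil\right)$; $b\mapsto p(b)$ is a bijection from $\{0,\dots,n-2\}$ onto $\Pi_\lambda\cap\mathbb{Z}^{d+1}$ and each integer $b$ is identified with $p(b)$. For $0\le i<n-1$ and $1\le t\le d$, the integers $r_{t,i}\ge0$ and $0\le s_{t,i}<n-1$ are defined by $i\lambda_t=r_{t,i}(n-1)+s_{t,i}$.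 *)

theory Defs
  imports Complex_Main
begin

text \<open>The vector lambda = (lambda_1,...,lambda_d) is a list lam of length d, with
  lambda_t = lam ! (t-1). Points of R^(d+1) with integer coordinates are int lists of
  length d+1; coordinate 0 is the first (extra) coordinate.\<close>

text \<open>Membership of an integer point in the fundamental parallelepiped Pi_lambda.
  gamma k for k < d is the coefficient of (1,e_(k+1)); gamma d that of (1,lambda).\<close>
definition in_Pi :: "nat list \<Rightarrow> int list \<Rightarrow> bool" where
  "in_Pi lam x \<longleftrightarrow> length x = Suc (length lam) \<and>
     (\<exists>\<gamma>::nat \<Rightarrow> real. (\<forall>k\<le>length lam. 0 \<le> \<gamma> k \<and> \<gamma> k < 1) \<and>
        real_of_int (x ! 0) = (\<Sum>k\<le>length lam. \<gamma> k) \<and>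
        (\<forall>t<length lam. real_of_int (x ! Suc t) = \<gamma> t + \<gamma> (length lam) * real (lam ! t)))"

definition P_le :: "nat list \<Rightarrow> int list \<Rightarrow> int list \<Rightarrow> bool" where
  "P_le lam \<sigma> \<mu> \<longleftrightarrow> in_Pi lam \<sigma> \<and> in_Pi lam \<mu> \<and> in_Pi lam (map2 (-) \<mu> \<sigma>)"

definition pt :: "nat list \<Rightarrow> nat \<Rightarrow> int list" where
  "pt lam b = (let n = sum_list lam in
     ((\<Sum>l\<leftarrow>lam. \<lceil>real (b * l) / real (n - 1)\<rceil>) - int b)
     # map (\<lambda>l. \<lceil>real (b * l) / real (n - 1)\<rceil>) lam)"

text \<open>s_{t,i} (with t 0-indexed): i * lambda_t = r (n-1) + s, 0 <= s < n-1.\<close>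
definition s_coef :: "nat list \<Rightarrow> nat \<Rightarrow> nat \<Rightarrow> nat" where
  "s_coef lam t i = (i * (lam ! t)) mod (sum_list lam - 1)"

end

theory Submission imports Defs begin

lemma aux1: "N \<noteq> 0 \<Longrightarrow> (a*N - g*l)/N + g/N*l = (a::real)"
  by (simp add: field_simps)

lemma aux2: "N \<noteq> 0 \<Longrightarrow> S - g*(N+1)/N + g/N = S - (g::real)"
  by (simp add: field_simps)

lemma in_Pi_iff:
  fixes lam :: "nat list" and x :: "int list"
  assumes sl: "sum_list lam = n" and n2: "n \<ge> 2" and lx: "length x = Suc (length lam)"
  shows "in_Pi lam x \<longleftrightarrow>
    (0 \<le> (\<Sum>t<length lam. x!Suc t) - x!0 \<and> (\<Sum>t<length lam. x!Suc t) - x!0 < int n - 1 \<and>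
     (\<forall>t<length lam. 0 \<le> (int n - 1)*x!Suc t - ((\<Sum>t<length lam. x!Suc t) - x!0)*int(lam!t) \<and>
        (int n - 1)*x!Suc t - ((\<Sum>t<length lam. x!Suc t) - x!0)*int(lam!t) < int n - 1))"
    (is "_ \<longleftrightarrow> (0 \<le> ?g \<and> ?g < _ \<and> ?R)")
proof -
  define d where "d = length lam"
  have nsum: "real n = (\<Sum>t<d. real (lam!t))"
    using sl unfolding d_def by (metis of_nat_sum sum_list_sum_nth atLeast0LessThan)
  have Npos: "real n - 1 > 0" using n2 by simp
  show ?thesis
  proof
    assume "in_Pi lam x"
    then obtain \<gamma> :: "nat \<Rightarrow> real" where g01: "\<forall>k\<le>d. 0 \<le> \<gamma> k \<and> \<gamma> k < 1"
      and x0: "real_of_int (x ! 0) = (\<Sum>k\<le>d. \<gamma> k)"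
      and xt: "\<forall>t<d. real_of_int (x ! Suc t) = \<gamma> t + \<gamma> d * real (lam ! t)"
      unfolding in_Pi_def d_def by blast
    have s1: "real_of_int (\<Sum>t<d. x!Suc t) = (\<Sum>t<d. \<gamma> t) + \<gamma> d * real n"
      using xt by (simp add: nsum sum.distrib sum_distrib_left)
    have x0': "real_of_int (x ! 0) = (\<Sum>k<d. \<gamma> k) + \<gamma> d"
      using x0 by (simp add: lessThan_Suc_atMost[symmetric])
    have gg: "real_of_int ?g = \<gamma> d * (real n - 1)"
      using s1 x0' unfolding d_def by (simp add: algebra_simps)
    have gd: "0 \<le> \<gamma> d" "\<gamma> d < 1" using g01 by auto
    have A: "0 \<le> ?g" 
    proof -
      have "0 \<le> real_of_int ?g" using gg gd Npos by simp
      then show ?thesis by linarith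
    qed
    have B: "?g < int n - 1"
    proof -
      have "real_of_int ?g < real n - 1" using gg gd Npos by simp
      then show ?thesis by linarith
    qed
    have C: ?R
    proof (intro allI impI)
      fix t assume t: "t < length lam"
      have e: "real_of_int ((int n - 1)*x!Suc t - ?g*int(lam!t)) = (real n - 1) * \<gamma> t"
      proof -
        have "real_of_int ((int n - 1)*x!Suc t - ?g*int(lam!t)) = (real n - 1)*real_of_int(x!Suc t) - real_of_int ?g * real(lam!t)"
          by simp
        also have "\<dots> = (real n - 1)*(\<gamma> t + \<gamma> d * real (lam ! t)) - \<gamma> d * (real n - 1) * real(lam!t)"
          using xt t gg unfolding d_def by simp
        also have "\<dots> = (real n - 1) * \<gamma> t" by (simp add: algebra_simps)
        finally show ?thesis .
      qed
      have "0 \<le> \<gamma> t" "\<gamma> t < 1" using g01 t unfolding d_def by auto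
      then have "0 \<le> (real n - 1) * \<gamma> t" "(real n - 1) * \<gamma> t < real n - 1"
        using Npos by auto
      then show "0 \<le> (int n - 1)*x!Suc t - ?g*int(lam!t) \<and>
        (int n - 1)*x!Suc t - ?g*int(lam!t) < int n - 1"
        using e by linarith
    qed
    show "0 \<le> ?g \<and> ?g < int n - 1 \<and> ?R" using A B C by blast
  next
    assume H: "0 \<le> ?g \<and> ?g < int n - 1 \<and> ?R"
    define \<gamma> where "\<gamma> k = (if k < d then (real_of_int (x!Suc k) * (real n - 1) - real_of_int ?g * real (lam!k)) / (real n - 1)
       else real_of_int ?g / (real n - 1))" for k
    have g01: "\<forall>k\<le>d. 0 \<le> \<gamma> k \<and> \<gamma> k < 1"
    proof (intro allI impI)
      fix k assume k: "k \<le> d"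
      show "0 \<le> \<gamma> k \<and> \<gamma> k < 1"
      proof (cases "k < d")
        case True
        then have "0 \<le> (int n - 1)*x!Suc k - ?g*int(lam!k)" "(int n - 1)*x!Suc k - ?g*int(lam!k) < int n - 1"
          using H unfolding d_def by auto
        then have "0 \<le> real_of_int ((int n - 1)*x!Suc k - ?g*int(lam!k))" 
          "real_of_int ((int n - 1)*x!Suc k - ?g*int(lam!k)) < real n - 1"
          by linarith+
        then have "0 \<le> real_of_int (x!Suc k) * (real n - 1) - real_of_int ?g * real (lam!k)"
          "real_of_int (x!Suc k) * (real n - 1) - real_of_int ?g * real (lam!k) < real n - 1"
          by (simp_all add: algebra_simps)
        then show ?thesis using True Npos unfolding \<gamma>_def by (simp add: divide_simps)
      next
        case False
        have "0 \<le> real_of_int ?g" "real_of_int ?g < real n - 1" using H by linarith+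
        then show ?thesis using False Npos unfolding \<gamma>_def by (simp add: divide_simps)
      qed
    qed
    have xt: "\<forall>t<d. real_of_int (x ! Suc t) = \<gamma> t + \<gamma> d * real (lam ! t)"
    proof (intro allI impI)
      fix t assume t: "t < d"
      have "\<gamma> t + \<gamma> d * real (lam ! t) = (real_of_int (x!Suc t) * (real n - 1) - real_of_int ?g * real (lam!t)) / (real n - 1)
          + real_of_int ?g / (real n - 1) * real (lam ! t)"
        unfolding \<gamma>_def using t by simp
      also have "\<dots> = real_of_int (x!Suc t)" using Npos aux1[of "real n - 1"] by simp
      finally show "real_of_int (x ! Suc t) = \<gamma> t + \<gamma> d * real (lam ! t)" by simp
    qed
    have sg: "(\<Sum>k<d. \<gamma> k) = real_of_int (\<Sum>t<d. x!Suc t) - real_of_int ?g * real n / (real n - 1)"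
    proof -
      have "(\<Sum>k<d. \<gamma> k) = (\<Sum>k<d. real_of_int (x!Suc k) - real_of_int ?g * real (lam!k) / (real n - 1))"
        using Npos unfolding \<gamma>_def by (intro sum.cong) (auto simp: divide_simps)
      also have "\<dots> = real_of_int (\<Sum>t<d. x!Suc t) - real_of_int ?g * real n / (real n - 1)"
        by (simp add: sum_subtractf nsum sum_divide_distrib[symmetric] sum_distrib_left)
      finally show ?thesis .
    qed
    have x0: "real_of_int (x ! 0) = (\<Sum>k\<le>d. \<gamma> k)"
    proof -
      have "(\<Sum>k\<le>d. \<gamma> k) = (\<Sum>k<d. \<gamma> k) + \<gamma> d" by (simp add: lessThan_Suc_atMost[symmetric])
      also have "\<dots> = real_of_int (\<Sum>t<d. x!Suc t) - real_of_int ?g * real n / (real n - 1) + real_of_int ?g / (real n - 1)"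
        using sg unfolding \<gamma>_def by simp
      also have "\<dots> = real_of_int (\<Sum>t<d. x!Suc t) - real_of_int ?g"
        using Npos aux2[of "real n - 1" "real_of_int (\<Sum>t<d. x!Suc t)" "real_of_int ?g"] by simp
      also have "\<dots> = real_of_int (x!0)" unfolding d_def by simp
      finally show ?thesis by simp
    qed
    show "in_Pi lam x" unfolding in_Pi_def using lx g01 xt x0 unfolding d_def by blast
  qed
qed

lemma ceil_nat:
  assumes N: "0 < N"
  shows "\<lceil>real x / real N\<rceil> = int (x div N) + (if x mod N = 0 then 0 else 1)"
proof -
  have x: "real x / real N = real (x mod N) / real N + of_int (int (x div N))"
  proof -
    have "real x = real (x div N) * real N + real (x mod N)"
      by (metis div_mult_mod_eq of_nat_add of_nat_mult)
    then show ?thesis using N by (simp add: field_simps)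
  qed
  have "\<lceil>real (x mod N) / real N\<rceil> = (if x mod N = 0 then 0 else 1)"
  proof (cases "x mod N = 0")
    case False
    have "x mod N < N" using N by simp
    then have "real (x mod N) / real N \<le> 1" "0 < real (x mod N) / real N"
      using N False by (auto simp: divide_simps)
    then show ?thesis using False by (simp add: ceiling_eq_iff)
  qed simp
  then show ?thesis unfolding x by (simp only: ceiling_add_of_int)
qed

lemma key:
  fixes a b N :: nat
  assumes N: "N > 0" and ab: "a \<le> b"
  shows "(0 \<le> int N * ((int (b div N) + (if b mod N = 0 then 0 else 1)) - (int (a div N) + (if a mod N = 0 then 0 else 1))) - (int b - int a) \<and>
          int N * ((int (b div N) + (if b mod N = 0 then 0 else 1)) - (int (a div N) + (if a mod N = 0 then 0 else 1))) - (int b - int a) < int N)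
   \<longleftrightarrow> int (a mod N) + int ((b-a) mod N) - int (b mod N) = int N * ((if a mod N = 0 then 0 else 1) + (if (b-a) mod N = 0 then 0 else 1) - (if b mod N=0 then 0 else 1))"
proof -
  define sa where "sa = a mod N"
  define sb where "sb = b mod N"
  define sd where "sd = (b - a) mod N"
  have ea: "int a = int N * int (a div N) + int sa" unfolding sa_def
    by (metis div_mult_mod_eq mult.commute of_nat_add of_nat_mult)
  have eb: "int b = int N * int (b div N) + int sb" unfolding sb_def
    by (metis div_mult_mod_eq mult.commute of_nat_add of_nat_mult)
  have E: "int N * ((int (b div N) + (if b mod N = 0 then 0 else 1)) - (int (a div N) + (if a mod N = 0 then 0 else 1))) - (int b - int a)
     = int N * ((if sb = 0 then 0 else 1) - (if sa = 0 then 0 else 1)) - int sb + int sa"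
    using ea eb unfolding sa_def sb_def by (simp add: algebra_simps)
  have sa: "sa < N" "sb < N" using N unfolding sa_def sb_def by auto
  have sdm: "int sd = (int sb - int sa) mod int N"
  proof -
    have "int sd = (int b - int a) mod int N" unfolding sd_def using ab by (simp add: zmod_int of_nat_diff)
    also have "\<dots> = (int sb - int sa) mod int N"
      unfolding sa_def sb_def by (simp add: mod_diff_eq zmod_int)
    finally show ?thesis .
  qed
  have sd: "int sd = (if sa \<le> sb then int sb - int sa else int sb - int sa + int N)"
  proof (cases "sa \<le> sb")
    case True
    then show ?thesis using sdm sa by (simp add: mod_pos_pos_trivial)
  next
    case False
    have "(int sb - int sa) mod int N = (int sb - int sa + int N) mod int N" by simp
    also have "\<dots> = int sb - int sa + int N" using False sa by (intro mod_pos_pos_trivial) auto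
    finally show ?thesis using sdm False by simp
  qed
  show ?thesis unfolding E unfolding sa_def[symmetric] sb_def[symmetric] sd_def[symmetric]
    using sd sa N by (cases "sa = 0"; cases "sb = 0"; cases "sd = 0"; cases "sa \<le> sb") (auto split: if_splits)
qed



lemma realeq:
  fixes sa sd sb N :: nat
  assumes N: "0 < N" and "sa < N" "sd < N" "sb < N"
  shows "(real sa + real sd - real sb) / real N = real_of_int \<lceil>real sa / real N\<rceil> + real_of_int \<lceil>real sd / real N\<rceil> - real_of_int \<lceil>real sb / real N\<rceil>
    \<longleftrightarrow> int sa + int sd - int sb = int N * ((if sa = 0 then 0 else 1) + (if sd = 0 then 0 else 1) - (if sb = 0 then 0 else 1))"
proof -
  have c: "\<lceil>real s / real N\<rceil> = (if s = 0 then 0 else 1)" if "s < N" for s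
    using ceil_nat[OF N, of s] that by simp
  have "(real sa + real sd - real sb) / real N = real_of_int ((if sa = 0 then 0 else 1) + (if sd = 0 then 0 else 1) - (if sb = 0 then 0 else 1))
     \<longleftrightarrow> real sa + real sd - real sb = real N * real_of_int ((if sa = 0 then 0 else 1) + (if sd = 0 then 0 else 1) - (if sb = 0 then 0 else 1))"
    using N by (simp add: divide_eq_eq mult.commute)
  also have "\<dots> \<longleftrightarrow> real_of_int (int sa + int sd - int sb) = real_of_int (int N * ((if sa = 0 then 0 else 1) + (if sd = 0 then 0 else 1) - (if sb = 0 then 0 else 1)))"
    by simp
  also have "\<dots> \<longleftrightarrow> int sa + int sd - int sb = int N * ((if sa = 0 then 0 else 1) + (if sd = 0 then 0 else 1) - (if sb = 0 then 0 else 1))"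
    by (rule of_int_eq_iff)
  finally show ?thesis using c assms by simp
qed

theorem lemma2p16:
  fixes lam :: "nat list" and d n i j :: nat
  assumes "length lam = d" and "d \<ge> 1"
    and "\<forall>t<d. lam ! t > 0"
    and "sum_list lam = n" and "n \<ge> 2"
    and "i < n - 1" and "j < n - 1" and "i \<noteq> j"
  shows "P_le lam (pt lam i) (pt lam j) \<longleftrightarrow>
    (i < j \<and> (\<forall>t<d.
       (real (s_coef lam t i) + real (s_coef lam t (j - i)) - real (s_coef lam t j)) / real (n - 1)
       = real_of_int \<lceil>real (s_coef lam t i) / real (n - 1)\<rceil>
         + real_of_int \<lceil>real (s_coef lam t (j - i)) / real (n - 1)\<rceil>
         - real_of_int \<lceil>real (s_coef lam t j) / real (n - 1)\<rceil>))"

proof -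
  define N where "N = n - 1"
  have N0: "N > 0" using assms(5) unfolding N_def by simp
  have nN: "int n - 1 = int N" "n - 1 = N" using assms(5) unfolding N_def by auto
  have sl: "sum_list lam = N + 1" using assms(4,5) unfolding N_def by simp
  have c: "\<And>t b. \<lceil>real (b * l) / real (n - 1)\<rceil> = int (b * l div N) + (if b * l mod N = 0 then 0 else 1)" for l
    unfolding nN(2) by (rule ceil_nat[OF N0])
  have nS: "n - Suc 0 = N" unfolding N_def by simp
  have c': "\<And>b l. \<lceil>real b * real l / real N\<rceil> = int (b * l div N) + (if b * l mod N = 0 then 0 else 1)"
    using ceil_nat[OF N0] by (metis of_nat_mult)
  have lenpt: "\<And>b. length (pt lam b) = Suc d" unfolding pt_def Let_def using assms(1) by simp
  define C where "C b t = int (b * lam!t div N) + (if b * lam!t mod N = 0 then 0 else 1)" for b t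
  have pt0: "\<And>b. pt lam b ! 0 = (\<Sum>t<d. C b t) - int b"
    unfolding pt_def Let_def C_def assms(4) nN(2) using assms(1) c' by (simp add: sum_list_sum_nth atLeast0LessThan)
  have ptS: "\<And>b t. t < d \<Longrightarrow> pt lam b ! Suc t = C b t"
    unfolding pt_def Let_def C_def using assms(1) c' by (simp add: assms(4) nS)
  have gpt: "\<And>b. (\<Sum>t<d. pt lam b ! Suc t) - pt lam b ! 0 = int b"
    using pt0 ptS by simp
  have I: "in_Pi lam X \<longleftrightarrow> (0 \<le> (\<Sum>t<d. X!Suc t) - X!0 \<and> (\<Sum>t<d. X!Suc t) - X!0 < int N \<and>
     (\<forall>t<d. 0 \<le> int N * X!Suc t - ((\<Sum>t<d. X!Suc t) - X!0)*int(lam!t) \<and>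
        int N * X!Suc t - ((\<Sum>t<d. X!Suc t) - X!0)*int(lam!t) < int N))" if "length X = Suc d" for X
    using in_Pi_iff[OF assms(4,5), of X] that unfolding assms(1) nN(1) by simp
  have inpt: "\<And>b. b < n - 1 \<Longrightarrow> in_Pi lam (pt lam b)"
  proof -
    fix b assume b: "b < n - 1"
    have "\<forall>t<d. 0 \<le> int N * C b t - int b * int (lam ! t) \<and> int N * C b t - int b * int (lam ! t) < int N"
    proof (intro allI impI)
      fix t assume "t < d"
      have e: "int (b * lam!t) = int N * int (b * lam!t div N) + int (b * lam!t mod N)"
        by (metis div_mult_mod_eq mult.commute of_nat_add of_nat_mult)
      have lt: "b * lam!t mod N < N" using N0 by simp
      have "int N * C b t - int b * int (lam ! t) = int N * (if b * lam!t mod N = 0 then 0 else 1) - int (b * lam!t mod N)"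
        unfolding C_def using e by (simp add: algebra_simps)
      then show "0 \<le> int N * C b t - int b * int (lam ! t) \<and> int N * C b t - int b * int (lam ! t) < int N"
        using lt N0 by (cases "b * lam!t mod N = 0") auto
    qed
    then show "in_Pi lam (pt lam b)"
      unfolding I[OF lenpt] gpt using b ptS nN(2) by simp
  qed
  define x where "x = map2 (-) (pt lam j) (pt lam i)"
  have lx: "length x = Suc d" unfolding x_def using lenpt by simp
  have xk: "\<And>k. k < Suc d \<Longrightarrow> x ! k = pt lam j ! k - pt lam i ! k"
    unfolding x_def using lenpt by simp
  have gx: "(\<Sum>t<d. x ! Suc t) - x ! 0 = int j - int i"
  proof -
    have "(\<Sum>t<d. x ! Suc t) = (\<Sum>t<d. pt lam j ! Suc t) - (\<Sum>t<d. pt lam i ! Suc t)"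
      using xk by (simp add: sum_subtractf)
    then show ?thesis using xk[of 0] gpt[of i] gpt[of j] by simp
  qed
  have xS: "\<And>t. t < d \<Longrightarrow> x ! Suc t = C j t - C i t" using xk ptS by simp
  have "P_le lam (pt lam i) (pt lam j) \<longleftrightarrow> in_Pi lam x"
    unfolding P_le_def x_def using inpt assms(6,7) by simp
  also have "\<dots> \<longleftrightarrow> (i < j \<and> (\<forall>t<d. 0 \<le> int N * (C j t - C i t) - (int j - int i) * int (lam ! t) \<and>
        int N * (C j t - C i t) - (int j - int i) * int (lam ! t) < int N))"
    unfolding I[OF lx] gx using xS assms(6,7,8) nN(2) by auto
  also have "\<dots> \<longleftrightarrow> (i < j \<and> (\<forall>t<d.
       (real (s_coef lam t i) + real (s_coef lam t (j - i)) - real (s_coef lam t j)) / real (n - 1)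
       = real_of_int \<lceil>real (s_coef lam t i) / real (n - 1)\<rceil>
         + real_of_int \<lceil>real (s_coef lam t (j - i)) / real (n - 1)\<rceil>
         - real_of_int \<lceil>real (s_coef lam t j) / real (n - 1)\<rceil>))"
  proof -
    have "0 \<le> int N * (C j t - C i t) - (int j - int i) * int (lam ! t) \<and>
        int N * (C j t - C i t) - (int j - int i) * int (lam ! t) < int N
      \<longleftrightarrow> (real (s_coef lam t i) + real (s_coef lam t (j - i)) - real (s_coef lam t j)) / real (n - 1)
       = real_of_int \<lceil>real (s_coef lam t i) / real (n - 1)\<rceil>
         + real_of_int \<lceil>real (s_coef lam t (j - i)) / real (n - 1)\<rceil>
         - real_of_int \<lceil>real (s_coef lam t j) / real (n - 1)\<rceil>" if ij: "i < j" for t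
    proof -
      define l where "l = lam ! t"
      have s1: "s_coef lam t i = (i*l) mod N" "s_coef lam t j = (j*l) mod N" "s_coef lam t (j-i) = (j*l - i*l) mod N"
        unfolding s_coef_def l_def sl by (simp_all add: diff_mult_distrib)
      have ab: "i * l \<le> j * l" using ij by simp
      have e1: "int N * (C j t - C i t) - (int j - int i) * int (lam ! t) =
        int N * ((int (j*l div N) + (if j*l mod N = 0 then 0 else 1)) - (int (i*l div N) + (if i*l mod N = 0 then 0 else 1))) - (int (j*l) - int (i*l))"
        unfolding C_def l_def by (simp add: algebra_simps)
      show ?thesis unfolding e1 key[OF N0 ab] s1 nN(2)
        by (rule realeq[symmetric]) (use N0 in auto)
    qed
    then show ?thesis by blast
  qed
  finally show ?thesis .
qed

end
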